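(* For any Dyck path $\lambda\in\mathbf D_N$, \[ \prod_{\substack{1<i\le N\\ r_i(\lambda)=r_{i-1}(\lambda)+1}}\bigl(1+z\,t^{-r_i(\lambda)}\bigr)=\prod_{\substack{1<i\le N\\ c_i(\lambda)=c_{i-1}(\lambda)+1}}\bigl(1+z\,t^{-c_i(\lambda)}\bigr). \]
   Context: A Dyck path $\lambda\in\mathbf D_N$ is a lattice path of south and east unit steps from $(0,N)$ to $(N,0)$ lying weakly below the segment joining these points; the staircase path $\delta$ alternates south and east steps. $r_i(\lambda)$ is the number of lattice squares in the $i$-th row (rows numbered north to south) lying above $\lambda$ and below $\delta$; $c_i(\lambda)$ is the number of such squares in the $i$-th column, columns numbered from right to left (equivalently $c_i(\lambda)=r_i(\lambda^* )$ for the transposed path). $z,t$ are indeterminates. *)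

theory Defs
  imports Main
begin

(* Lattice paths from (0,N) to (N,0) encoded as step lists:
   True = south step, False = east step. *)

definition dyck :: "nat \<Rightarrow> bool list \<Rightarrow> bool" where
  "dyck N w \<longleftrightarrow> length w = 2 * N \<and> length (filter id w) = N \<and>
     (\<forall>k \<le> length w. length (filter Not (take k w)) \<le> length (filter id (take k w)))"
  (* the point after k steps is (#east, N - #south); weakly below the segment
     x + y = N  iff  #east <= #south *)

(* number of east steps taken before the i-th south step (i >= 1);
   this is the x-coordinate of the i-th south step of the path *)
fun east_before :: "bool list \<Rightarrow> nat \<Rightarrow> nat" where
  "east_before [] i = 0"
| "east_before (True # w) i = (if i \<le> 1 then 0 else east_before w (i - 1))"
| "east_before (False # w) i = Suc (east_before w i)"

(* r_i: number of unit squares [x,x+1] x [N-i,N-i+1] in row i (rows numbered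
   north to south) lying above the path (x >= x-coordinate of its i-th south
   step) and below the staircase delta = SESE...SE (x < i - 1) *)
definition row_area :: "bool list \<Rightarrow> nat \<Rightarrow> nat" where
  "row_area w i = card {x::nat. east_before w i \<le> x \<and> x < i - 1}"

(* transposed path (reflection in the line y = x) *)
definition transpose_path :: "bool list \<Rightarrow> bool list" where
  "transpose_path w = rev (map Not w)"

(* c_i: squares in the i-th column, columns numbered right to left *)
definition col_area :: "bool list \<Rightarrow> nat \<Rightarrow> nat" where
  "col_area w i = row_area (transpose_path w) i"

end

theory Submission imports Defs "HOL-Library.Multiset" begin

fun RR :: "bool list \<Rightarrow> int multiset" where
  "RR [] = {#}"
| "RR (a # w) = image_mset (\<lambda>x. if a then x + 1 else x - 1) (RR w)
     + (if a \<and> w \<noteq> [] \<and> hd w then {#1#} else {#})"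

fun EE :: "bool list \<Rightarrow> int multiset" where
  "EE [] = {#}"
| "EE (a # w) = image_mset (\<lambda>x. if a then x + 1 else x - 1) (EE w)
     + (if \<not> a \<and> w \<noteq> [] \<and> \<not> hd w then {#-1#} else {#})"

definition hgt :: "bool list \<Rightarrow> int" where
  "hgt w = int (length (filter id w)) - int (length (filter Not w))"

definition ind :: "bool \<Rightarrow> int" where "ind P = (if P then 1 else 0)"

definition pot :: "bool list \<Rightarrow> int \<Rightarrow> int" where
  "pot w k = (if w = [] then ind (0 \<ge> k) else if last w then ind (hgt w > k) else ind (hgt w \<ge> k))"

lemma count_plus1: "count (image_mset (\<lambda>x. x + (1::int)) M) k = count M (k - 1)"
proof -
  have "(\<lambda>x. x + (1::int)) -` {k} = {k - 1}" by auto
  then show ?thesis by (simp add: count_image_mset Int_insert_left not_in_iff)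
qed

lemma count_minus1: "count (image_mset (\<lambda>x. x - (1::int)) M) k = count M (k + 1)"
proof -
  have "(\<lambda>x. x - (1::int)) -` {k} = {k + 1}" by auto
  then show ?thesis by (simp add: count_image_mset Int_insert_left not_in_iff)
qed

lemma hgt_Cons: "hgt (a # w) = hgt w + (if a then 1 else -1)"
  by (cases a) (auto simp: hgt_def)

lemma countRE: "int (count (RR w) k) - int (count (EE w) k)
   = pot w k - ind (0 \<ge> k) + ind (w \<noteq> [] \<and> \<not> hd w \<and> k = 0)"
proof (induction w arbitrary: k)
  case Nil
  then show ?case by (simp add: pot_def ind_def)
next
  case (Cons a w)
  have IH: "int (count (RR w) (if a then k - 1 else k + 1)) - int (count (EE w) (if a then k - 1 else k + 1))
     = pot w (if a then k - 1 else k + 1) - ind (0 \<ge> (if a then k - 1 else k + 1))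
       + ind (w \<noteq> [] \<and> \<not> hd w \<and> (if a then k - 1 else k + 1) = 0)" by (rule Cons.IH)
  show ?case
  proof (cases "w = []")
    case True
    then show ?thesis by (cases a) (auto simp: pot_def ind_def hgt_def)
  next
    case False
    then have "last (a # w) = last w" by simp
    show ?thesis
    proof (cases a)
      case True
      then show ?thesis using IH False \<open>last (a # w) = last w\<close>
        by (cases "hd w") (auto simp: count_plus1 pot_def ind_def hgt_Cons split: if_splits)
    next
      case F: False
      then show ?thesis using IH False \<open>last (a # w) = last w\<close>
        by (cases "hd w"; cases "k = 0") (auto simp: count_minus1 pot_def ind_def hgt_Cons split: if_splits)
    qed
  qed
qed


lemma RR_snoc: "RR (w @ [a]) = RR w + (if w \<noteq> [] \<and> last w \<and> a then {#hgt w#} else {#})"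
proof (induction w)
  case Nil
  then show ?case by simp
next
  case (Cons b w)
  then show ?case
    by (cases "w = []"; cases b) (auto simp: hgt_def hgt_Cons)
qed

lemma EE_snoc: "EE (w @ [a]) = EE w + (if w \<noteq> [] \<and> \<not> last w \<and> \<not> a then {#hgt w#} else {#})"
proof (induction w)
  case Nil
  then show ?case by simp
next
  case (Cons b w)
  then show ?case
    by (cases "w = []"; cases b) (auto simp: hgt_def hgt_Cons)
qed

lemma hgt_rev_map: "hgt (rev (map Not w)) = - hgt w"
  by (induction w) (auto simp: hgt_def)

lemma RR_transpose: "RR (rev (map Not w)) = image_mset (\<lambda>x. x - hgt w) (EE w)"
proof (induction w)
  case Nil
  then show ?case by simp
next
  case (Cons a w)
  have e: "rev (map Not (a # w)) = rev (map Not w) @ [\<not> a]" by simp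
  have l: "w \<noteq> [] \<Longrightarrow> last (rev (map Not w)) = (\<not> hd w)"
    by (cases w) auto
  show ?case
    unfolding e RR_snoc Cons.IH
    by (cases a; cases "w = []") (auto simp: hgt_rev_map l multiset.map_comp o_def hgt_Cons)
qed


definition vals :: "bool list \<Rightarrow> int list" where
  "vals w = map (\<lambda>i. int (i - 1) - int (east_before w i))
     (filter (\<lambda>i. east_before w i = east_before w (i - 1)) [2..<length (filter id w) + 1])"

lemma eb1: "east_before w 1 = 0 \<longleftrightarrow> (w = [] \<or> hd w)"
  by (cases w; cases "hd w") auto

lemma vals_RR: "mset (vals w) = RR w"
proof (induction w)
  case Nil
  then show ?case by (simp add: vals_def)
next
  case (Cons a w)
  show ?case
  proof (cases a)
    case False
    have "vals (a # w) = map (\<lambda>x. x - 1) (vals w)"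
      using False unfolding vals_def by (simp add: o_def)
    then show ?thesis using Cons.IH False by (simp add: multiset.map_comp o_def)
  next
    case True
    define n where "n = length (filter id w)"
    show ?thesis
    proof (cases "n = 0")
      case True
      then have "\<not> (w \<noteq> [] \<and> hd w)"
        unfolding n_def by (cases w) auto
      with True \<open>a\<close> show ?thesis using Cons.IH by (simp add: vals_def n_def)
    next
      case False
      let ?P = "\<lambda>i. east_before w i = east_before w (i - 1)"
      let ?f = "\<lambda>i. int (i - 1) - int (east_before w i)"
      have L: "[2..<n + 2] = 2 # map Suc [2..<n + 1]"
        using False by (simp add: upt_conv_Cons map_Suc_upt)
      have P: "filter (\<lambda>i. east_before (True # w) i = east_before (True # w) (i - 1)) (map Suc [2..<n + 1])
          = map Suc (filter ?P [2..<n + 1])"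
        unfolding filter_map
        by (rule arg_cong[where f="map Suc"], rule filter_cong) auto
      have F: "map (\<lambda>i. int (i - 1) - int (east_before (True # w) i)) (map Suc xs) = map (\<lambda>x. x + 1) (map ?f xs)"
        if "set xs \<subseteq> {2..}" for xs
        using that by (auto simp: subset_iff)
      have S: "set (filter ?P [2..<n + 1]) \<subseteq> {2..}" by auto
      have "vals (a # w) = (if w \<noteq> [] \<and> hd w then [1] else []) @ map (\<lambda>x. x + 1) (vals w)"
      proof -
        have "w \<noteq> []" using False unfolding n_def by auto
        have "vals (a # w) = map (\<lambda>i. int (i - 1) - int (east_before (True # w) i))
          (filter (\<lambda>i. east_before (True # w) i = east_before (True # w) (i - 1)) [2..<n + 2])"
          using \<open>a\<close> unfolding vals_def n_def by simp
        also have "... = map (\<lambda>i. int (i - 1) - int (east_before (True # w) i))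
          ((if east_before w 1 = 0 then [2] else []) @ map Suc (filter ?P [2..<n + 1]))"
          unfolding L P[symmetric] by simp
        also have "... = (if w \<noteq> [] \<and> hd w then [1] else []) @ map (\<lambda>x. x + 1) (vals w)"
          unfolding vals_def n_def[symmetric] F[OF S]
          using eb1[of w] \<open>w \<noteq> []\<close> by simp
        finally show ?thesis .
      qed
      then show ?thesis using Cons.IH \<open>a\<close> by (auto simp: add.commute)
    qed
  qed
qed


lemma eb_prefix:
  "1 \<le> i \<Longrightarrow> i \<le> length (filter id w) \<Longrightarrow>
   \<exists>k \<le> length w. length (filter id (take k w)) = i - 1 \<and> length (filter Not (take k w)) = east_before w i"
proof (induction w arbitrary: i)
  case Nil
  then show ?case by simp
next
  case (Cons a w)
  show ?case
  proof (cases a)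
    case True
    show ?thesis
    proof (cases "i \<le> 1")
      case True
      then show ?thesis using \<open>a\<close> by (intro exI[of _ 0]) auto
    next
      case False
      have "1 \<le> i - 1" "i - 1 \<le> length (filter id w)"
        using False Cons.prems \<open>a\<close> by (auto simp: id_def)
      then obtain k where "k \<le> length w" "length (filter id (take k w)) = i - 1 - 1"
        "length (filter Not (take k w)) = east_before w (i - 1)"
        using Cons.IH[of "i - 1"] by blast
      then show ?thesis using \<open>a\<close> False by (intro exI[of _ "Suc k"]) (auto simp: id_def)
    qed
  next
    case False
    then obtain k where "k \<le> length w" "length (filter id (take k w)) = i - 1"
      "length (filter Not (take k w)) = east_before w i"
      using Cons.IH[of i] Cons.prems False by (auto simp: id_def)
    then show ?thesis using False by (intro exI[of _ "Suc k"]) (auto simp: id_def)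
  qed
qed

lemma dyck_eb: "dyck N w \<Longrightarrow> 1 \<le> i \<Longrightarrow> i \<le> N \<Longrightarrow> east_before w i \<le> i - 1"
  unfolding dyck_def using eb_prefix[of i w] by force

lemma row_area_eq: "row_area w i = (i - 1) - east_before w i"
proof -
  have "{x. east_before w i \<le> x \<and> x < i - 1} = {east_before w i..<i - 1}" by auto
  then show ?thesis unfolding row_area_def by simp
qed

lemma prod_RR:
  fixes z t :: "'a :: field"
  assumes d: "dyck N w"
  shows "(\<Prod>i\<in>{i. 1 < i \<and> i \<le> N \<and> row_area w i = row_area w (i - 1) + 1}.
            1 + z * t powi (- int (row_area w i)))
       = prod_mset (image_mset (\<lambda>k. 1 + z * t powi (- k)) (RR w))"
proof -
  let ?P = "\<lambda>i. east_before w i = east_before w (i - 1)"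
  let ?f = "\<lambda>i. int (i - 1) - int (east_before w i)"
  let ?g = "\<lambda>k::int. 1 + z * t powi (- k)"
  have N: "length (filter id w) = N" using d by (simp add: dyck_def)
  have A: "{i. 1 < i \<and> i \<le> N \<and> row_area w i = row_area w (i - 1) + 1} = set (filter ?P [2..<N + 1])"
  proof -
    have "row_area w i = row_area w (i - 1) + 1 \<longleftrightarrow> ?P i" if "1 < i" "i \<le> N" for i
    proof -
      have "east_before w i \<le> i - 1" using dyck_eb[OF d, of i] that by auto
      moreover have "east_before w (i - 1) \<le> i - 1 - 1" using dyck_eb[OF d, of "i - 1"] that by auto
      ultimately show ?thesis unfolding row_area_eq using that by arith
    qed
    then show ?thesis by auto
  qed
  have V: "int (row_area w i) = ?f i" if "i \<in> set (filter ?P [2..<N + 1])" for i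
    using dyck_eb[OF d, of i] that unfolding row_area_eq by auto
  have "(\<Prod>i\<in>{i. 1 < i \<and> i \<le> N \<and> row_area w i = row_area w (i - 1) + 1}.
            1 + z * t powi (- int (row_area w i)))
     = (\<Prod>i\<in>set (filter ?P [2..<N + 1]). ?g (?f i))"
    unfolding A by (rule prod.cong) (auto simp: V)
  also have "... = prod_list (map (\<lambda>i. ?g (?f i)) (filter ?P [2..<N + 1]))"
    by (rule prod.distinct_set_conv_list) simp
  also have "... = prod_mset (image_mset ?g (mset (map ?f (filter ?P [2..<N + 1]))))"
    unfolding mset_map[symmetric] prod_mset_prod_list map_map o_def by (rule refl)
  also have "map ?f (filter ?P [2..<N + 1]) = vals w"
    unfolding vals_def N by (rule refl)
  finally show ?thesis by (simp add: vals_RR)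
qed


lemma len_TF: "length (filter id w) + length (filter Not w) = length w"
  by (induction w) auto

lemma dyck_hgt: "dyck N w \<Longrightarrow> hgt w = 0"
  unfolding dyck_def hgt_def using len_TF[of w] by auto

lemma dyck_hd: "dyck N w \<Longrightarrow> w \<noteq> [] \<Longrightarrow> hd w"
  unfolding dyck_def by (cases w) (auto split: if_splits dest!: spec[of _ 1])

lemma dyck_last: assumes d: "dyck N w" and ne: "w \<noteq> []" shows "\<not> last w"
proof
  assume l: "last w"
  have w: "w = butlast w @ [last w]" using ne by simp
  have "length (filter Not (take (length w - 1) w)) \<le> length (filter id (take (length w - 1) w))"
    using d unfolding dyck_def by auto
  moreover have "take (length w - 1) w = butlast w" by (simp add: butlast_conv_take)
  moreover have "length (filter id w) = length (filter id (butlast w)) + 1"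
    "length (filter Not w) = length (filter Not (butlast w))"
    using l by (subst w, simp)+
  moreover have "length (filter id w) = length (filter Not w)"
    using d len_TF[of w] unfolding dyck_def by auto
  ultimately show False by simp
qed

lemma cnt_rm1: "length (filter id (rev (map Not w))) = length (filter Not w)"
  by (induction w) auto

lemma cnt_rm2: "length (filter Not (rev (map Not w))) = length (filter id w)"
  by (induction w) auto

lemma dyck_transpose: assumes d: "dyck N w" shows "dyck N (rev (map Not w))"
proof -
  have cnt1: "length (filter id (rev (map Not w))) = length (filter Not w)"
    by (induction w) auto
  have cnt2: "length (filter Not (rev (map Not w))) = length (filter id w)"
    by (induction w) auto
  have L: "length w = 2 * N" "length (filter id w) = N" using d by (auto simp: dyck_def)
  have pre: "\<And>k. k \<le> length w \<Longrightarrow> length (filter Not (take k w)) \<le> length (filter id (take k w))"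
    using d by (auto simp: dyck_def)
  show ?thesis unfolding dyck_def
  proof (intro conjI allI impI)
    show "length (rev (map Not w)) = 2 * N" using L by simp
    show "length (filter id (rev (map Not w))) = N" using cnt1 len_TF[of w] L by simp
    fix k assume k: "k \<le> length (rev (map Not w))"
    define m where "m = length w - k"
    have t: "take k (rev (map Not w)) = rev (map Not (drop m w))"
      unfolding m_def by (simp add: take_map take_rev rev_map)
    note a1 = cnt_rm1[of "drop m w"]
    note a2 = cnt_rm2[of "drop m w"]
    have s1: "length (filter id (take m w)) + length (filter id (drop m w)) = N"
      using L(2) by (metis append_take_drop_id filter_append length_append)
    have s2: "length (filter Not (take m w)) + length (filter Not (drop m w)) = N"
      using L len_TF[of w] by (metis append_take_drop_id filter_append length_append add_diff_cancel_left' mult_2)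
    have "m \<le> length w" unfolding m_def by simp
    then have "length (filter Not (take m w)) \<le> length (filter id (take m w))" by (rule pre)
    then show "length (filter Not (take k (rev (map Not w)))) \<le> length (filter id (take k (rev (map Not w))))"
      unfolding t a1 a2 using s1 s2 by linarith
  qed
qed

lemma RR_EE: assumes d: "dyck N w" shows "RR w = EE w"
proof (rule multiset_eqI)
  fix k
  show "count (RR w) k = count (EE w) k"
  proof (cases "w = []")
    case True
    then show ?thesis by simp
  next
    case False
    have "int (count (RR w) k) - int (count (EE w) k) = 0"
      unfolding countRE using False dyck_hd[OF d False] dyck_last[OF d False] dyck_hgt[OF d]
      by (simp add: pot_def ind_def)
    then show ?thesis by simp
  qed
qed

theorem lemma2p2p4:
  fixes N :: nat and lam :: "bool list" and z t :: "'a :: field"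
  assumes "dyck N lam" and "t \<noteq> 0"
  shows "(\<Prod>i\<in>{i. 1 < i \<and> i \<le> N \<and> row_area lam i = row_area lam (i - 1) + 1}.
            1 + z * t powi (- int (row_area lam i)))
       = (\<Prod>i\<in>{i. 1 < i \<and> i \<le> N \<and> col_area lam i = col_area lam (i - 1) + 1}.
            1 + z * t powi (- int (col_area lam i)))"
proof -
  have d': "dyck N (rev (map Not lam))" by (rule dyck_transpose[OF assms(1)])
  have "RR (rev (map Not lam)) = RR lam"
    unfolding RR_transpose dyck_hgt[OF assms(1)] RR_EE[OF assms(1)] by simp
  then show ?thesis
    unfolding col_area_def transpose_path_def prod_RR[OF assms(1)] prod_RR[OF d'] by simp
qed

end
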